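(* Let $G$ be a graph, let $k\ge1$ be an integer and let $d:=\Delta(G^{\lfloor k/2\rfloor})$. Then $G^k$ is a $\lfloor k/2\rfloor$-shallow minor of $G\circ\overline{K_{d+1}}$.
   Context: Graphs are finite, simple, undirected. For an integer $m\ge0$, $G^m$ has vertex set $V(G)$ with distinct $u,v$ adjacent iff $\mathrm{dist}_G(u,v)\le m$. $\Delta$ is maximum degree. $\overline{K_n}$ is the edgeless graph on $n$ vertices. The lexicographic product $G_1\circ G_2$ has vertex set $V(G_1)\times V(G_2)$, with $(a,v)(b,u)$ an edge iff $ab\in E(G_1)$, or $a=b$ and $uv\in E(G_2)$; thus in $G\circ\overline{K_n}$, $(a,i)(b,j)$ is an edge iff $ab\in E(G)$. $H$ is an $r$-shallow minor of $G'$ if there are pairwise vertex-disjoint connected subgraphs $\mu(v)$ ($v\in V(H)$) of $G'$, each of radius at most $r$, such that for every $vw\in E(H)$ some edge of $G'$ joins $\mu(v)$ and $\mu(w)$. *)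

theory Defs
  imports Main "HOL-Library.Extended_Nat"
begin

type_synonym 'a graph = "'a set \<times> ('a \<Rightarrow> 'a \<Rightarrow> bool)"

definition verts :: "'a graph \<Rightarrow> 'a set" where "verts G = fst G"
definition adj :: "'a graph \<Rightarrow> 'a \<Rightarrow> 'a \<Rightarrow> bool" where "adj G = snd G"

definition is_graph :: "'a graph \<Rightarrow> bool" where
  "is_graph G \<longleftrightarrow> finite (verts G)
     \<and> (\<forall>u v. adj G u v \<longrightarrow> u \<in> verts G \<and> v \<in> verts G)
     \<and> (\<forall>u v. adj G u v \<longrightarrow> adj G v u)
     \<and> (\<forall>u. \<not> adj G u u)"

text \<open>A walk in G from u to v, given as the list of its vertices; its length is length p - 1.\<close>
definition walk :: "'a graph \<Rightarrow> 'a list \<Rightarrow> 'a \<Rightarrow> 'a \<Rightarrow> bool" where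
  "walk G p u v \<longleftrightarrow> p \<noteq> [] \<and> hd p = u \<and> last p = v \<and> set p \<subseteq> verts G
     \<and> (\<forall>i. Suc i < length p \<longrightarrow> adj G (p ! i) (p ! Suc i))"

text \<open>Distance (infinite if no walk exists).\<close>
definition gdist :: "'a graph \<Rightarrow> 'a \<Rightarrow> 'a \<Rightarrow> enat" where
  "gdist G u v = (INF p \<in> {p. walk G p u v}. enat (length p - 1))"

definition gpow :: "'a graph \<Rightarrow> nat \<Rightarrow> 'a graph" where
  "gpow G m = (verts G, \<lambda>u v. u \<in> verts G \<and> v \<in> verts G \<and> u \<noteq> v \<and> gdist G u v \<le> enat m)"

definition degree :: "'a graph \<Rightarrow> 'a \<Rightarrow> nat" where
  "degree G u = card {v \<in> verts G. adj G u v}"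

definition maxdeg :: "'a graph \<Rightarrow> nat" where
  "maxdeg G = (if verts G = {} then 0 else Max (degree G ` verts G))"

text \<open>Lexicographic product G \<circ> (edgeless graph on n vertices), the latter with vertex set {0..<n}.\<close>
definition lex_edgeless :: "'a graph \<Rightarrow> nat \<Rightarrow> ('a \<times> nat) graph" where
  "lex_edgeless G n = (verts G \<times> {0..<n}, \<lambda>(a, i) (b, j). i < n \<and> j < n \<and> adj G a b)"

definition subgraph :: "'a graph \<Rightarrow> 'a graph \<Rightarrow> bool" where
  "subgraph S G \<longleftrightarrow> verts S \<subseteq> verts G
     \<and> (\<forall>u v. adj S u v \<longrightarrow> u \<in> verts S \<and> v \<in> verts S \<and> adj G u v)
     \<and> (\<forall>u v. adj S u v \<longrightarrow> adj S v u)"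

definition connected_graph :: "'a graph \<Rightarrow> bool" where
  "connected_graph G \<longleftrightarrow> verts G \<noteq> {} \<and> (\<forall>u\<in>verts G. \<forall>v\<in>verts G. gdist G u v < \<infinity>)"

definition radius_le :: "'a graph \<Rightarrow> nat \<Rightarrow> bool" where
  "radius_le G r \<longleftrightarrow> (\<exists>c\<in>verts G. \<forall>v\<in>verts G. gdist G c v \<le> enat r)"

definition shallow_minor :: "'a graph \<Rightarrow> nat \<Rightarrow> 'b graph \<Rightarrow> bool" where
  "shallow_minor H r G' \<longleftrightarrow> (\<exists>\<mu> :: 'a \<Rightarrow> 'b graph.
     (\<forall>v\<in>verts H. subgraph (\<mu> v) G' \<and> connected_graph (\<mu> v) \<and> radius_le (\<mu> v) r)
     \<and> (\<forall>v\<in>verts H. \<forall>w\<in>verts H. v \<noteq> w \<longrightarrow> verts (\<mu> v) \<inter> verts (\<mu> w) = {})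
     \<and> (\<forall>v w. adj H v w \<longrightarrow> (\<exists>x\<in>verts (\<mu> v). \<exists>y\<in>verts (\<mu> w). adj G' x y)))"

end

theory Submission
  imports Defs
begin

lemma walk_single: "x \<in> verts G \<Longrightarrow> walk G [x] x x"
  by (simp add: walk_def)

lemma walk_Cons2: "walk G (x # y # p) u v \<longleftrightarrow> x = u \<and> x \<in> verts G \<and> adj G x y \<and> walk G (y # p) y v"
proof -
  have "(\<forall>i. Suc i < length (x # y # p) \<longrightarrow> adj G ((x # y # p) ! i) ((x # y # p) ! Suc i))
     \<longleftrightarrow> adj G x y \<and> (\<forall>i. Suc i < length (y # p) \<longrightarrow> adj G ((y # p) ! i) ((y # p) ! Suc i))"
    (is "?A \<longleftrightarrow> ?B")
  proof
    assume ?A then show ?B by (metis Suc_less_eq length_Cons nth_Cons_0 nth_Cons_Suc zero_less_Suc)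
  next
    assume ?B then show ?A by (metis Suc_less_eq length_Cons nth_Cons_0 nth_Cons_Suc not0_implies_Suc)
  qed
  then show ?thesis by (auto simp: walk_def)
qed

lemma walk_Cons1: "walk G [x] u v \<longleftrightarrow> x = u \<and> x = v \<and> x \<in> verts G"
  by (auto simp: walk_def)

lemma walk_verts: "walk G p u v \<Longrightarrow> u \<in> verts G \<and> v \<in> verts G"
  by (auto simp: walk_def)

lemma walk_append: "walk G p u v \<Longrightarrow> walk G q v w \<Longrightarrow> walk G (p @ tl q) u w"
proof (induction p arbitrary: u)
  case Nil then show ?case by (simp add: walk_def)
next
  case (Cons x p)
  show ?case
  proof (cases p)
    case Nil
    then have "x = u" "x = v" using Cons.prems by (auto simp: walk_def)
    then show ?thesis using Cons.prems Nil by (cases q) (auto simp: walk_def)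
  next
    case (Cons y p')
    then show ?thesis using Cons.prems Cons.IH[of y] by (auto simp: walk_Cons2)
  qed
qed

lemma walk_rev: assumes sym: "\<forall>a b. adj G a b \<longrightarrow> adj G b a"
  shows "walk G p u v \<Longrightarrow> walk G (rev p) v u"
proof (induction p arbitrary: u)
  case Nil then show ?case by (simp add: walk_def)
next
  case (Cons x p)
  show ?case
  proof (cases p)
    case Nil
    then show ?thesis using Cons.prems by (auto simp: walk_def)
  next
    case (Cons y p')
    then have w: "walk G (rev p) v y" "x = u" "adj G x y" "x \<in> verts G" using Cons.prems Cons.IH[of y] by (auto simp: walk_Cons2)
    have "walk G [y, x] y x" using w sym walk_verts[OF w(1)] by (auto simp: walk_Cons2 walk_Cons1)
    from walk_append[OF w(1) this] w show ?thesis by simp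
  qed
qed

lemma walk_drop: "walk G p u v \<Longrightarrow> j < length p \<Longrightarrow> walk G (drop j p) (p ! j) v"
  unfolding walk_def
  by (auto simp: hd_drop_conv_nth last_drop dest: in_set_dropD)

lemma walk_take: assumes "walk G p u v" "j < length p" shows "walk G (take (Suc j) p) u (p ! j)"
proof -
  have l: "length (take (Suc j) p) = Suc j" using assms(2) by simp
  have "last (take (Suc j) p) = p ! j"
    by (subst last_conv_nth) (use l assms(2) in auto)
  moreover have "hd (take (Suc j) p) = hd p" using assms(2) by (cases p) auto
  ultimately show ?thesis using assms l unfolding walk_def
    by (auto dest: in_set_takeD)
qed

lemma walk_map:
  assumes "walk G p u v" "\<forall>x\<in>set p. g x \<in> verts H"
    "\<forall>i. Suc i < length p \<longrightarrow> adj H (g (p ! i)) (g (p ! Suc i))"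
  shows "walk H (map g p) (g u) (g v)"
  using assms unfolding walk_def by (auto simp: hd_map last_map)

lemma gdist_le_iff: "gdist G u v \<le> enat n \<longleftrightarrow> (\<exists>p. walk G p u v \<and> length p \<le> Suc n)"
proof
  assume a: "gdist G u v \<le> enat n"
  let ?S = "(\<lambda>p. enat (length p - 1)) ` {p. walk G p u v}"
  have "{p. walk G p u v} \<noteq> {}"
  proof
    assume "{p. walk G p u v} = {}"
    then have "gdist G u v = \<infinity>" by (simp add: gdist_def top_enat_def)
    then show False using a by simp
  qed
  then have "?S \<noteq> {}" by blast
  then obtain x0 where "x0 \<in> ?S" by blast
  then have "(LEAST x. x \<in> ?S) \<in> ?S" by (rule LeastI)
  then have "Inf ?S \<in> ?S" using \<open>?S \<noteq> {}\<close> unfolding Inf_enat_def by simp 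
  then show "\<exists>p. walk G p u v \<and> length p \<le> Suc n" using a unfolding gdist_def by force
next
  assume "\<exists>p. walk G p u v \<and> length p \<le> Suc n"
  then obtain p where "walk G p u v" "length p \<le> Suc n" by blast
  then have "gdist G u v \<le> enat (length p - 1)" unfolding gdist_def by (auto intro: INF_lower)
  also have "\<dots> \<le> enat n" using \<open>length p \<le> Suc n\<close> by simp
  finally show "gdist G u v \<le> enat n" .
qed

lemma gdist_fin_iff: "gdist G u v < \<infinity> \<longleftrightarrow> (\<exists>p. walk G p u v)"
proof
  assume "gdist G u v < \<infinity>"
  then obtain n where "gdist G u v = enat n" by (cases "gdist G u v") auto
  then show "\<exists>p. walk G p u v" using gdist_le_iff[of G u v n] by auto
next
  assume "\<exists>p. walk G p u v"
  then obtain p where "walk G p u v" by blast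
  then have "gdist G u v \<le> enat (length p - 1)" unfolding gdist_def by (auto intro: INF_lower)
  then show "gdist G u v < \<infinity>" using enat_ord_simps(4) order.strict_trans1 by blast
qed


lemma verts_pair[simp]: "verts (A, E) = A" by (simp add: verts_def)
lemma adj_pair[simp]: "adj (A, E) = E" by (simp add: adj_def)

lemma verts_gpow[simp]: "verts (gpow G m) = verts G" by (simp add: gpow_def)
lemma adj_gpow: "adj (gpow G m) u v \<longleftrightarrow> u \<in> verts G \<and> v \<in> verts G \<and> u \<noteq> v \<and> gdist G u v \<le> enat m"
  by (simp add: gpow_def)
lemma verts_lex[simp]: "verts (lex_edgeless G n) = verts G \<times> {0..<n}" by (simp add: lex_edgeless_def)
lemma adj_lex: "adj (lex_edgeless G n) x y \<longleftrightarrow> snd x < n \<and> snd y < n \<and> adj G (fst x) (fst y)"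
  by (cases x, cases y) (simp add: lex_edgeless_def)

definition gball :: "'a graph \<Rightarrow> nat \<Rightarrow> 'a \<Rightarrow> 'a set" where
  "gball G r u = {v \<in> verts G. gdist G u v \<le> enat r}"
definition fidx :: "'a graph \<Rightarrow> nat \<Rightarrow> 'a \<Rightarrow> 'a \<Rightarrow> nat" where
  "fidx G r u = (SOME h. bij_betw h (gball G r u) {0..<card (gball G r u)})"
definition bset :: "'a graph \<Rightarrow> nat \<Rightarrow> 'a \<Rightarrow> ('a \<times> nat) set" where
  "bset G r v = {(u, fidx G r u v) | u. v \<in> gball G r u}"
definition bgraph :: "'a graph \<Rightarrow> nat \<Rightarrow> nat \<Rightarrow> 'a \<Rightarrow> ('a \<times> nat) graph" where
  "bgraph G r n v = (bset G r v, \<lambda>x y. x \<in> bset G r v \<and> y \<in> bset G r v \<and> adj (lex_edgeless G n) x y)"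

lemma gdist_verts: "gdist G u v \<le> enat m \<Longrightarrow> u \<in> verts G \<and> v \<in> verts G"
  using gdist_le_iff walk_verts by metis

lemma fidx_bij:
  assumes "is_graph G" shows "bij_betw (fidx G r u) (gball G r u) {0..<card (gball G r u)}"
proof -
  have "finite (gball G r u)" using assms by (auto simp: is_graph_def gball_def)
  from ex_bij_betw_finite_nat[OF this] show ?thesis unfolding fidx_def by (rule someI_ex)
qed

lemma card_gball:
  assumes "is_graph G" shows "card (gball G r u) \<le> maxdeg (gpow G r) + 1"
proof (cases "u \<in> verts G")
  case False
  then have "gball G r u = {}" by (auto simp: gball_def dest: gdist_verts)
  then show ?thesis by simp
next
  case True
  have fin: "finite (verts G)" using assms by (simp add: is_graph_def)
  have "gball G r u \<subseteq> insert u {v \<in> verts (gpow G r). adj (gpow G r) u v}"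
    using True by (auto simp: gball_def adj_gpow)
  then have "card (gball G r u) \<le> card (insert u {v \<in> verts (gpow G r). adj (gpow G r) u v})"
    using fin by (intro card_mono) auto
  also have "\<dots> \<le> degree (gpow G r) u + 1"
    using fin unfolding degree_def by (simp add: card_insert_le_m1)
  also have "degree (gpow G r) u \<le> maxdeg (gpow G r)"
    using True fin unfolding maxdeg_def by auto
  finally show ?thesis by simp
qed

lemma fidx_lt:
  assumes "is_graph G" "v \<in> gball G r u" shows "fidx G r u v < maxdeg (gpow G r) + 1"
  using bij_betwE[OF fidx_bij[OF assms(1)]] assms card_gball[OF assms(1), of r u] by fastforce

lemma sym_G: "is_graph G \<Longrightarrow> \<forall>a b. adj G a b \<longrightarrow> adj G b a" by (simp add: is_graph_def)


lemma bset_mem: "x \<in> bset G r v \<longleftrightarrow> v \<in> gball G r (fst x) \<and> snd x = fidx G r (fst x) v"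
  by (cases x) (auto simp: bset_def)

lemma bset_sub:
  assumes "is_graph G" "x \<in> bset G r v"
  shows "fst x \<in> verts G \<and> snd x < maxdeg (gpow G r) + 1"
  using assms fidx_lt[OF assms(1)] by (auto simp: bset_mem gball_def dest: gdist_verts)

lemma bgraph_walk:
  assumes g: "is_graph G" and v: "v \<in> verts G" and x: "x \<in> bset G r v"
  defines "n \<equiv> maxdeg (gpow G r) + 1"
  shows "\<exists>q. walk (bgraph G r n v) q (v, fidx G r v v) x \<and> length q \<le> Suc r"
proof -
  obtain u where xu: "x = (u, fidx G r u v)" and vu: "v \<in> gball G r u" using x by (auto simp: bset_def)
  then obtain p where p: "walk G p u v" "length p \<le> Suc r" by (auto simp: gball_def gdist_le_iff)
  define g where "g w = (w, fidx G r w v)" for w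
  have inb: "g w \<in> bset G r v" if "w \<in> set p" for w
  proof -
    obtain j where j: "j < length p" "w = p ! j" using \<open>w \<in> set p\<close> by (metis in_set_conv_nth)
    have "walk G (drop j p) w v" using walk_drop[OF p(1) j(1)] j by simp
    moreover have "length (drop j p) \<le> Suc r" using p(2) by simp
    ultimately have "v \<in> gball G r w" using v by (auto simp: gball_def gdist_le_iff)
    then show ?thesis by (simp add: g_def bset_def)
  qed
  have wr: "walk G (rev p) v u" using walk_rev[OF sym_G[OF g] p(1)] .
  have "walk (bgraph G r n v) (map g (rev p)) (g v) (g u)"
  proof (rule walk_map[OF wr])
    show "\<forall>x\<in>set (rev p). g x \<in> verts (bgraph G r n v)" using inb by (simp add: bgraph_def)
    show "\<forall>i. Suc i < length (rev p) \<longrightarrow> adj (bgraph G r n v) (g (rev p ! i)) (g (rev p ! Suc i))"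
    proof (intro allI impI)
      fix i assume i: "Suc i < length (rev p)"
      have a: "adj G (rev p ! i) (rev p ! Suc i)" using wr i by (simp add: walk_def)
      have m1: "rev p ! i \<in> set p" "rev p ! Suc i \<in> set p" using i
        by (metis Suc_lessD nth_mem set_rev)+
      have b1: "g (rev p ! i) \<in> bset G r v" "g (rev p ! Suc i) \<in> bset G r v" using inb m1 by auto
      show "adj (bgraph G r n v) (g (rev p ! i)) (g (rev p ! Suc i))"
        using b1 a bset_sub[OF g b1(1)] bset_sub[OF g b1(2)]
        by (simp add: bgraph_def adj_lex n_def g_def)
    qed
  qed
  then show ?thesis using p(2) xu by (intro exI[of _ "map g (rev p)"]) (simp add: g_def)
qed


theorem lemma26:
  fixes G :: "'a graph" and k :: nat
  assumes "is_graph G" and "k \<ge> 1"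
  defines "d \<equiv> maxdeg (gpow G (k div 2))"
  shows "shallow_minor (gpow G k) (k div 2) (lex_edgeless G (d + 1))"
proof -
  note g = assms(1)
  define r where "r = k div 2"
  define n where "n = d + 1"
  have nd: "n = maxdeg (gpow G r) + 1" by (simp add: n_def d_def r_def)
  define \<mu> where "\<mu> = bgraph G r n"
  have symG: "\<forall>a b. adj G a b \<longrightarrow> adj G b a" using sym_G[OF g] .
  have symmu: "\<forall>a b. adj (\<mu> v) a b \<longrightarrow> adj (\<mu> v) b a" for v
    using symG by (auto simp: \<mu>_def bgraph_def adj_lex)
  have P1: "subgraph (\<mu> v) (lex_edgeless G n) \<and> connected_graph (\<mu> v) \<and> radius_le (\<mu> v) r"
    if v: "v \<in> verts G" for v
  proof (intro conjI)
    show "subgraph (\<mu> v) (lex_edgeless G n)"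
      unfolding subgraph_def
      using bset_sub[OF g, of _ r v] symG
      by (auto simp: \<mu>_def bgraph_def adj_lex nd)
    have c: "(v, fidx G r v v) \<in> bset G r v"
      using v walk_single[OF v] by (auto simp: bset_def gball_def gdist_le_iff)
    have W: "\<exists>q. walk (\<mu> v) q (v, fidx G r v v) x \<and> length q \<le> Suc r" if "x \<in> verts (\<mu> v)" for x
      using bgraph_walk[OF g v, of x r] that by (simp add: \<mu>_def bgraph_def nd)
    show "radius_le (\<mu> v) r"
      unfolding radius_le_def
      using c W by (intro bexI[of _ "(v, fidx G r v v)"]) (auto simp: gdist_le_iff \<mu>_def bgraph_def)
    show "connected_graph (\<mu> v)"
      unfolding connected_graph_def
    proof (intro conjI ballI)
      show "verts (\<mu> v) \<noteq> {}" using c by (auto simp: \<mu>_def bgraph_def)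
      fix x y assume "x \<in> verts (\<mu> v)" "y \<in> verts (\<mu> v)"
      then obtain q1 q2 where q: "walk (\<mu> v) q1 (v, fidx G r v v) x" "walk (\<mu> v) q2 (v, fidx G r v v) y"
        using W by blast
      have "walk (\<mu> v) (rev q1 @ tl q2) x y"
        using walk_append[OF walk_rev[OF symmu q(1)] q(2)] .
      then show "gdist (\<mu> v) x y < \<infinity>" unfolding gdist_fin_iff by blast
    qed
  qed
  have P2: "verts (\<mu> v) \<inter> verts (\<mu> w) = {}" if "v \<noteq> w" for v w
  proof (rule ccontr)
    assume "verts (\<mu> v) \<inter> verts (\<mu> w) \<noteq> {}"
    then obtain x where "x \<in> bset G r v" "x \<in> bset G r w" by (auto simp: \<mu>_def bgraph_def)
    then have "v \<in> gball G r (fst x)" "w \<in> gball G r (fst x)" "fidx G r (fst x) v = fidx G r (fst x) w"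
      by (auto simp: bset_mem)
    then have "v = w" using bij_betw_imp_inj_on[OF fidx_bij[OF g]] by (meson inj_onD)
    then show False using that by simp
  qed
  have P3: "\<exists>x\<in>verts (\<mu> v). \<exists>y\<in>verts (\<mu> w). adj (lex_edgeless G n) x y"
    if vw: "adj (gpow G k) v w" for v w
  proof -
    have vwG: "v \<in> verts G" "w \<in> verts G" "v \<noteq> w" and "gdist G v w \<le> enat k"
      using vw by (auto simp: adj_gpow)
    then obtain p where p: "walk G p v w" "length p \<le> Suc k" by (auto simp: gdist_le_iff)
    have lp: "length p \<ge> 2"
    proof (rule ccontr)
      assume "\<not> 2 \<le> length p"
      moreover have "p \<noteq> []" using p(1) by (simp add: walk_def)
      ultimately have "length p = 1" by (cases p) (auto simp: Suc_le_eq)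
      then obtain a where "p = [a]" by (cases p) auto
      then show False using p(1) vwG(3) by (auto simp: walk_Cons1)
    qed
    define m where "m = length p - 1"
    define a where "a = min r (m - 1)"
    have am: "Suc a < length p" using lp by (simp add: a_def m_def)
    have e: "adj G (p ! a) (p ! Suc a)" using p(1) am by (simp add: walk_def)
    have w1: "walk G (rev (take (Suc a) p)) (p ! a) v"
      using walk_rev[OF symG walk_take[OF p(1)]] am by simp
    have "length (rev (take (Suc a) p)) \<le> Suc r" using am by (simp add: a_def)
    then have b1: "v \<in> gball G r (p ! a)" using w1 vwG by (auto simp: gball_def gdist_le_iff)
    have w2: "walk G (drop (Suc a) p) (p ! Suc a) w" using walk_drop[OF p(1) am] .
    have "length (drop (Suc a) p) \<le> Suc r" using p(2) lp by (simp add: a_def m_def r_def)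
    then have b2: "w \<in> gball G r (p ! Suc a)" using w2 vwG by (auto simp: gball_def gdist_le_iff)
    define x where "x = (p ! a, fidx G r (p ! a) v)"
    define y where "y = (p ! Suc a, fidx G r (p ! Suc a) w)"
    have xy: "x \<in> bset G r v" "y \<in> bset G r w" using b1 b2 by (auto simp: x_def y_def bset_def)
    have "adj (lex_edgeless G n) x y"
      using bset_sub[OF g xy(1)] bset_sub[OF g xy(2)] e by (simp add: adj_lex nd x_def y_def)
    then show ?thesis using xy by (auto simp: \<mu>_def bgraph_def)
  qed
  show ?thesis
    unfolding shallow_minor_def r_def[symmetric] n_def[symmetric]
    using P1 P2 P3 by (intro exI[of _ \<mu>]) auto
qed

end
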